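(* For every integer $t\ge1$, $$-\frac{1}{8t^2}<\frac{S_1(t)}{(-1)^t\binom{-3/2}{t}}-\frac{(-1)^t}{\binom{-3/2}{t}}\bigl(\cosh\alpha-1\bigr)+\frac{\alpha\sinh\alpha}{2t}<\frac{13}{25t^2}.$$
   Context: $\alpha=\pi/6$. $(a)_m=a(a+1)\cdots(a+m-1)$ is the rising factorial ($(a)_0=1$); $\binom{x}{m}=x(x-1)\cdots(x-m+1)/m!$. For $t\ge0$, $$S_1(t)=\sum_{s=1}^t\frac{(-1)^s(1/2-s)_{s+1}}{s}\sum_{u=1}^s\frac{(-1)^u(-s)_u}{(s+u)!\,(2u-1)!}\left(\frac{\pi^2}{36}\right)^u.$$ *)

theory Defs
  imports "HOL-Analysis.Analysis"
begin

definition alpha :: real where "alpha = pi / 6"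

definition S1 :: "nat \<Rightarrow> real" where
  "S1 t = (\<Sum>s=1..t. ((-1)^s * pochhammer (1/2 - real s) (s+1) / real s) *
      (\<Sum>u=1..s. (-1)^u * pochhammer (- real s) u / (fact (s+u) * fact (2*u-1)) * (pi^2/36)^u))"

end

theory Submission imports Defs begin

fun qq :: "nat \<Rightarrow> nat \<Rightarrow> real" where
  "qq t 0 = 1"
| "qq t (Suc j) = qq t j * (real t - real j) / (real t + real j + 1)"

fun BB :: "nat \<Rightarrow> real" where
  "BB 0 = 1"
| "BB (Suc s) = BB s * (2 * real s + 1) / (2 * real s + 2)"

lemma qq_zero: "j > t \<Longrightarrow> qq t j = 0"
proof (induction j)
  case 0 then show ?case by simp
next
  case (Suc j)
  show ?case
  proof (cases "j = t")
    case True then show ?thesis by simp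
  next
    case False then have "j > t" using Suc.prems by simp
    then show ?thesis using Suc.IH by simp
  qed
qed

lemma qq_bounds: "0 \<le> qq t j \<and> qq t j \<le> 1"
proof (induction j)
  case 0 then show ?case by simp
next
  case (Suc j)
  show ?case
  proof (cases "j < t")
    case True
    have f0: "0 \<le> (real t - real j) / (real t + real j + 1)" using True by simp
    have f1: "(real t - real j) / (real t + real j + 1) \<le> 1" by (simp add: divide_le_eq_1)
    have "qq t (Suc j) = qq t j * ((real t - real j) / (real t + real j + 1))" by simp
    moreover have "0 \<le> qq t j * ((real t - real j) / (real t + real j + 1))"
      by (rule mult_nonneg_nonneg) (use Suc.IH f0 in auto)
    moreover have "qq t j * ((real t - real j) / (real t + real j + 1)) \<le> 1"
      using Suc.IH f0 f1 by (meson mult_le_one)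
    ultimately show ?thesis by simp
  next
    case False then have z: "qq t (Suc j) = 0" by (intro qq_zero) simp
    show ?thesis unfolding z by simp
  qed
qed

lemma qq_lower: "j \<le> t \<Longrightarrow> t > 0 \<Longrightarrow> 1 - real j ^ 2 / real t \<le> qq t j"
proof (induction j)
  case 0 then show ?case by simp
next
  case (Suc j)
  have IH: "1 - real j ^ 2 / real t \<le> qq t j" using Suc by simp
  have b: "0 \<le> qq t j" "qq t j \<le> 1" using qq_bounds by auto
  have "qq t (Suc j) = qq t j - qq t j * ((2 * real j + 1) / (real t + real j + 1))"
    by (simp add: field_simps)
  moreover have "qq t j * ((2 * real j + 1) / (real t + real j + 1)) \<le> (2 * real j + 1) / real t"
  proof -
    have "qq t j * ((2 * real j + 1) / (real t + real j + 1)) \<le> 1 * ((2 * real j + 1) / (real t + real j + 1))"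
      using b by (intro mult_right_mono) auto
    also have "\<dots> \<le> (2 * real j + 1) / real t" using Suc.prems
      apply (simp only: mult_1) by (rule frac_le) auto
    finally show ?thesis by simp
  qed
  moreover have "1 - real (Suc j) ^ 2 / real t = 1 - real j ^ 2 / real t - (2 * real j + 1) / real t"
    using Suc.prems by (simp add: field_simps power2_eq_square)
  ultimately show ?case using IH by linarith
qed

lemma qq_lower': "t > 0 \<Longrightarrow> 1 - qq t j \<le> real j ^ 2 / real t"
proof (cases "j \<le> t")
  case True
  assume "t > 0" then show ?thesis using qq_lower[OF True] by simp
next
  case False
  assume t: "t > 0"
  then have "qq t j = 0" using False by (intro qq_zero) simp
  moreover have "1 \<le> real j ^ 2 / real t"
  proof -
    have "real t \<le> real j ^ 2" using False
      by (metis linorder_not_le nat_le_linear of_nat_le_iff of_nat_power power2_nat_le_imp_le less_imp_le)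
    then show ?thesis using t by simp
  qed
  ultimately show ?thesis by simp
qed

lemma qq_shift: "qq t u * (real t + 1)^2 = qq (Suc t) u * (real t + 1 - real u) * (real t + 1 + real u)"
proof (induction u)
  case 0 then show ?case by (simp add: power2_eq_square)
next
  case (Suc u)
  have "qq t (Suc u) * (real t + 1)^2 = (qq t u * (real t + 1)^2) * (real t - real u) / (real t + real u + 1)"
    by simp
  also have "\<dots> = qq (Suc t) u * (real t + 1 - real u) * (real t - real u)"
    unfolding Suc.IH by (simp add: field_simps)
  also have "\<dots> = qq (Suc t) (Suc u) * (real t + 1 - real (Suc u)) * (real t + 1 + real (Suc u))"
    by (simp add: field_simps)
  finally show ?case .
qed

lemma qq_fact0: "u \<le> s \<Longrightarrow> qq s u * (fact (s - u) * fact (s + u)) = fact s * fact s"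
proof (induction u)
  case 0 then show ?case by simp
next
  case (Suc u)
  then have IH: "qq s u * (fact (s - u) * fact (s + u)) = fact s * fact s" by simp
  have e1: "fact (s - u) = (real s - real u) * fact (s - Suc u)"
    using Suc.prems by (metis Suc_diff_Suc Suc_le_lessD fact_Suc of_nat_diff less_imp_le_nat)
  have e2: "fact (s + Suc u) = (real s + real u + 1) * (fact (s + u) :: real)" by simp
  have p: "real s + real u + 1 \<noteq> 0" by simp
  have "qq s (Suc u) * (fact (s - Suc u) * fact (s + Suc u))
      = qq s u * ((real s - real u) * fact (s - Suc u)) * fact (s + u) * ((real s + real u + 1) / (real s + real u + 1))"
    unfolding e2 by simp
  also have "\<dots> = fact s * fact s" using p IH unfolding e1 by simp
  finally show ?case .
qed

lemma qq_fact: "u \<le> s \<Longrightarrow> qq s u = fact s * fact s / (fact (s - u) * fact (s + u))"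
  using qq_fact0[of u s] by (simp add: eq_divide_eq)

lemma BB_poch: "BB s = pochhammer (1/2) s / fact s"
proof (induction s)
  case 0 then show ?case by simp
next
  case (Suc s)
  have "BB (Suc s) = (pochhammer (1/2) s / fact s) * (2 * real s + 1) / (2 * real s + 2)"
    using Suc by simp
  also have "\<dots> = (pochhammer (1/2) s * (1/2 + real s)) / (fact s * (real s + 1))"
    by (simp add: field_simps)
  also have "\<dots> = pochhammer (1/2) (Suc s) / fact (Suc s)"
    by (simp add: pochhammer_Suc algebra_simps)
  finally show ?case .
qed

lemma BB_pos: "BB s > 0"
  by (induction s) auto


definition Phi :: "nat \<Rightarrow> nat \<Rightarrow> real" where
  "Phi t u = BB t * (2 * (\<Sum>j=0..u. qq t j) - 1 - qq t u)"

lemma alg_id0: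
  fixes P U Q B X Y Z :: real
  assumes "P * X = 1" "(P + U) * Y = 1" "(P + U + 1) * Z = 1"
  shows "B * (Q * (P - U) * (P + U) * X^2 + Q * (P - U) * (P + U) * X^2 * (P - 1 - U) * Y)
    = B * (2 * P - 1) * X / 2 * (Q + Q * (P - U) * Z + ((U + 1) * (Q * (P - U) * Z) - U * Q) * X)"
  using assms by algebra

lemma local_id:
  "BB t * (qq t u + qq t (Suc u)) = BB (Suc t) * (qq (Suc t) u + qq (Suc t) (Suc u)
     + ((real u + 1) * qq (Suc t) (Suc u) - real u * qq (Suc t) u) / (real t + 1))"
proof -
  define Q where "Q = qq (Suc t) u"
  define P where "P = real t + 1"
  define U where "U = real u"
  define X where "X = 1 / P"
  define Y where "Y = 1 / (P + U)"
  define Z where "Z = 1 / (P + U + 1)"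
  have pos: "P > 0" "P + U > 0" "P + U + 1 > 0" unfolding P_def U_def by auto
  have r: "P * X = 1" "(P + U) * Y = 1" "(P + U + 1) * Z = 1"
    unfolding X_def Y_def Z_def using pos by auto
  have h1: "qq t u = Q * (P - U) * (P + U) * X^2"
    using qq_shift[of t u] pos unfolding Q_def P_def U_def X_def by (simp add: field_simps)
  have h2: "qq t (Suc u) = qq t u * (P - 1 - U) * Y"
    unfolding P_def U_def Y_def using pos by (simp add: field_simps)
  have h3: "qq (Suc t) (Suc u) = Q * (P - U) * Z"
    unfolding Q_def P_def U_def Z_def using pos by (simp add: field_simps)
  have h4: "BB (Suc t) = BB t * (2 * P - 1) * X / 2"
    unfolding P_def X_def by (simp add: field_simps)
  have h5: "((real u + 1) * qq (Suc t) (Suc u) - real u * qq (Suc t) u) / (real t + 1)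
      = ((U + 1) * (Q * (P - U) * Z) - U * Q) * X"
    unfolding h3 unfolding Q_def U_def P_def X_def by simp
  show ?thesis unfolding h5 unfolding h2 unfolding h1 h3 h4 Q_def[symmetric]
    using alg_id0[OF r, of "BB t" Q] by simp
qed

lemma lin_id: "p \<noteq> 0 \<Longrightarrow> real u * b * Q / p + b * (Q + R + ((real u + 1) * R - real u * Q) / p) - b * (Q + R) = real (Suc u) * b * R / p"
  by (simp add: field_simps)

lemma Phi_step: "Phi t u - Phi (Suc t) u = real u * BB (Suc t) * qq (Suc t) u / (real t + 1)"
proof (induction u)
  case 0 then show ?case by (simp add: Phi_def)
next
  case (Suc u)
  have a: "Phi t' (Suc u) = Phi t' u + BB t' * (qq t' u + qq t' (Suc u))" for t'
    unfolding Phi_def by (simp add: algebra_simps)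
  have "Phi t (Suc u) - Phi (Suc t) (Suc u) = (Phi t u - Phi (Suc t) u)
      + BB t * (qq t u + qq t (Suc u)) - BB (Suc t) * (qq (Suc t) u + qq (Suc t) (Suc u))"
    unfolding a by simp
  also have "\<dots> = real (Suc u) * BB (Suc t) * qq (Suc t) (Suc u) / (real t + 1)"
    unfolding Suc.IH local_id[of t u] by (rule lin_id) simp
  finally show ?case .
qed

lemma sum_qq0: "(\<Sum>j=0..u. qq 0 j) = 1"
proof -
  have "(\<Sum>j=0..u. qq 0 j) = (\<Sum>j=0..u. if j = 0 then 1 else 0)"
    by (rule sum.cong) (auto intro: qq_zero)
  then show ?thesis by simp
qed

lemma Phi_closed: "u \<ge> 1 \<Longrightarrow> Phi t u = 1 - real u * (\<Sum>s=1..t. BB s * qq s u / real s)"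
proof (induction t)
  case 0
  have "qq 0 u = 0" using 0 by (intro qq_zero) simp
  then show ?case by (simp add: Phi_def sum_qq0)
next
  case (Suc t)
  have "Phi (Suc t) u = Phi t u - real u * BB (Suc t) * qq (Suc t) u / (real t + 1)"
    using Phi_step[of t u] by simp
  also have "\<dots> = 1 - real u * (\<Sum>s=1..Suc t. BB s * qq s u / real s)"
    using Suc by (simp add: algebra_simps add_divide_distrib)
  finally show ?case .
qed

lemma Phi_bounds: "u \<ge> 1 \<Longrightarrow> 0 \<le> Phi t u \<and> Phi t u \<le> 2 * real u * BB t"
proof -
  assume u: "u \<ge> 1"
  have qb: "\<And>j. 0 \<le> qq t j \<and> qq t j \<le> 1" by (rule qq_bounds)
  have s1: "(\<Sum>j=0..u. qq t j) = (\<Sum>j<u. qq t j) + qq t u"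
    by (simp add: atLeast0AtMost lessThan_Suc_atMost[symmetric])
  have s2: "(\<Sum>j<u. qq t j) \<le> real u"
    using sum_bounded_above[of "{..<u}" "\<lambda>j. qq t j" 1] qb by simp
  have s3: "(\<Sum>j=0..u. qq t j) = qq t 0 + (\<Sum>j=1..u. qq t j)"
    by (simp add: sum.atLeast_Suc_atMost)
  have s4: "qq t u \<le> (\<Sum>j=1..u. qq t j)"
    using u qb by (intro member_le_sum) auto
  have "0 \<le> 2 * (\<Sum>j=0..u. qq t j) - 1 - qq t u" using s3 s4 qb[of u] by simp
  moreover have "2 * (\<Sum>j=0..u. qq t j) - 1 - qq t u \<le> 2 * real u" using s1 s2 qb[of u] by simp
  moreover have "BB t > 0" by (rule BB_pos)
  ultimately show ?thesis unfolding Phi_def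
    by (metis mult.commute mult_left_mono mult_nonneg_nonneg less_imp_le mult.assoc)
qed


definition kk :: "nat \<Rightarrow> real" where "kk u = (alpha^2)^u / fact (2*u - 1)"
definition JJ :: "nat \<Rightarrow> real" where "JJ s = (\<Sum>u=1..s. qq s u * kk u)"
definition ww :: "nat \<Rightarrow> real" where "ww s = BB s * JJ s / (2 * real s)"

lemma poch_half: "(-1)^s * pochhammer (1/2 - real s) (s+1) = pochhammer (1/2) s / (2::real)"
proof -
  have "pochhammer (1/2 - real s) (s+1) = pochhammer (- (real s - 1/2)) (s+1)" by simp
  also have "\<dots> = (-1)^(s+1) * pochhammer (real s - 1/2 - real (s+1) + 1) (s+1)"
    by (rule pochhammer_minus)
  also have "real s - 1/2 - real (s+1) + 1 = - 1/2" by simp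
  also have "pochhammer (-1/2) (s+1) = (-1/2) * pochhammer (1/2 :: real) s"
    by (simp add: pochhammer_rec)
  finally have e: "pochhammer (1/2 - real s) (s+1) = (-1)^(s+1) * ((-1/2) * pochhammer (1/2 :: real) s)" .
  have m: "(-1::real)^s * (-1)^(s+1) = -1"
    by (simp add: power_add[symmetric] )
  have "(-1)^s * pochhammer (1/2 - real s) (s+1) = ((-1)^s * (-1)^(s+1)) * ((-1/2) * pochhammer (1/2 :: real) s)"
    unfolding e by (simp only: mult.assoc)
  also have "\<dots> = pochhammer (1/2) s / 2" unfolding m by simp
  finally show ?thesis .
qed

lemma poch_fact: "pochhammer (real m + 1) u * fact m = (fact (m + u) :: real)"
proof (induction u)
  case 0 then show ?case by simp
next
  case (Suc u)
  have "pochhammer (real m + 1) (Suc u) * fact m = (pochhammer (real m + 1) u * fact m) * (real m + 1 + real u)"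
    by (simp add: pochhammer_Suc algebra_simps)
  also have "\<dots> = fact (m + Suc u)" unfolding Suc.IH by (simp add: algebra_simps)
  finally show ?case .
qed

lemma poch_minus_s: "u \<le> s \<Longrightarrow> (-1)^u * pochhammer (- real s) u = (fact s / fact (s - u) :: real)"
proof -
  assume us: "u \<le> s"
  have h1: "pochhammer (- real s) u = (-1)^u * pochhammer (real s - real u + 1) u"
    by (rule pochhammer_minus)
  have h2: "real s - real u = real (s - u)" using us by simp
  have "(-1)^u * pochhammer (- real s) u = ((-1)^u * (-1)^u) * pochhammer (real (s - u) + 1) u"
    unfolding h1 h2[symmetric] by (simp only: mult.assoc)
  also have "(-1::real)^u * (-1)^u = 1" by (simp add: power_mult_distrib[symmetric])
  also have "pochhammer (real (s - u) + 1) u = fact s / fact (s - u)"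
    using poch_fact[of "s - u" u] us by (simp add: eq_divide_eq)
  finally show ?thesis by simp
qed

lemma gen_id1: "(F::real) \<noteq> 0 \<Longrightarrow> F / G / (H * K) * C = F * F / (G * H) * (C / K) / F"
  by (simp add: field_simps)

lemma gen_id2: "(A::real) / 2 / S * (X / F) = A / F * X / (2 * S)"
  by (simp add: field_simps)

lemma S1_eq: "S1 t = (\<Sum>s=1..t. ww s)"
  unfolding S1_def
proof (rule sum.cong[OF refl])
  fix s assume s: "s \<in> {1..t}"
  have c: "pi^2/36 = alpha^2" unfolding alpha_def by (simp add: power_divide)
  have inner: "(\<Sum>u=1..s. (-1)^u * pochhammer (- real s) u / (fact (s+u) * fact (2*u-1)) * (pi^2/36)^u)
      = (\<Sum>u=1..s. qq s u * kk u) / fact s"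
    unfolding sum_divide_distrib
  proof (rule sum.cong[OF refl])
    fix u assume u: "u \<in> {1..s}"
    then have "u \<le> s" by simp
    show "(-1)^u * pochhammer (- real s) u / (fact (s+u) * fact (2*u-1)) * (pi^2/36)^u = qq s u * kk u / fact s"
      unfolding poch_minus_s[OF \<open>u \<le> s\<close>] qq_fact[OF \<open>u \<le> s\<close>] kk_def c
      by (rule gen_id1) simp
  qed
  show "(-1)^s * pochhammer (1/2 - real s) (s+1) / real s *
      (\<Sum>u=1..s. (-1)^u * pochhammer (- real s) u / (fact (s+u) * fact (2*u-1)) * (pi^2/36)^u) = ww s"
    unfolding inner ww_def JJ_def BB_poch poch_half
    by (rule gen_id2)
qed


lemma kk_nonneg: "kk u \<ge> 0" unfolding kk_def by simp

lemma sum_extend: "s \<le> t \<Longrightarrow> (\<Sum>u=1..s. qq s u * f u) = (\<Sum>u=1..t. qq s u * f u)"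
  by (rule sum.mono_neutral_left) (auto simp: qq_zero)

lemma S1_alt: "S1 t = (\<Sum>u=1..t. kk u * (1 - Phi t u) / (2 * real u))"
proof -
  have "S1 t = (\<Sum>s=1..t. \<Sum>u=1..t. BB s * qq s u * kk u / (2 * real s))"
    unfolding S1_eq ww_def JJ_def
  proof (rule sum.cong[OF refl])
    fix s assume s: "s \<in> {1..t}"
    have "BB s * (\<Sum>u = 1..s. qq s u * kk u) / (2 * real s) = BB s * (\<Sum>u = 1..t. qq s u * kk u) / (2 * real s)"
      using s sum_extend[of s t kk] by simp
    also have "\<dots> = (\<Sum>u=1..t. BB s * qq s u * kk u / (2 * real s))"
      by (simp add: sum_distrib_left sum_divide_distrib mult.assoc)
    finally show "BB s * (\<Sum>u = 1..s. qq s u * kk u) / (2 * real s) = (\<Sum>u=1..t. BB s * qq s u * kk u / (2 * real s))" .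
  qed
  also have "\<dots> = (\<Sum>u=1..t. \<Sum>s=1..t. BB s * qq s u * kk u / (2 * real s))"
    by (rule sum.swap)
  also have "\<dots> = (\<Sum>u=1..t. kk u * (1 - Phi t u) / (2 * real u))"
  proof (rule sum.cong[OF refl])
    fix u assume u: "u \<in> {1..t}"
    have "(\<Sum>s=1..t. BB s * qq s u * kk u / (2 * real s)) = kk u / 2 * (\<Sum>s=1..t. BB s * qq s u / real s)"
      by (simp add: sum_distrib_left field_simps)
    also have "(\<Sum>s=1..t. BB s * qq s u / real s) = (1 - Phi t u) / real u"
      using Phi_closed[of u t] u by (simp add: field_simps)
    finally show "(\<Sum>s=1..t. BB s * qq s u * kk u / (2 * real s)) = kk u * (1 - Phi t u) / (2 * real u)"
      by simp
  qed
  finally show ?thesis .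
qed

definition CC :: "nat \<Rightarrow> real" where "CC t = (\<Sum>u=1..t. kk u / (2 * real u))"

lemma S1_CC: "0 \<le> CC t - S1 t \<and> CC t - S1 t \<le> BB t * (\<Sum>u=1..t. kk u)"
proof -
  have e: "CC t - S1 t = (\<Sum>u=1..t. kk u * Phi t u / (2 * real u))"
    unfolding CC_def S1_alt sum_subtractf[symmetric]
    by (rule sum.cong[OF refl]) (simp add: field_simps)
  have "0 \<le> (\<Sum>u=1..t. kk u * Phi t u / (2 * real u))"
    using Phi_bounds kk_nonneg by (intro sum_nonneg) auto
  moreover have "(\<Sum>u=1..t. kk u * Phi t u / (2 * real u)) \<le> (\<Sum>u=1..t. BB t * kk u)"
  proof (rule sum_mono)
    fix u assume u: "u \<in> {1..t}"
    then have "Phi t u \<le> 2 * real u * BB t" using Phi_bounds by auto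
    then have "kk u * Phi t u \<le> kk u * (2 * real u * BB t)" using kk_nonneg by (intro mult_left_mono) auto
    then show "kk u * Phi t u / (2 * real u) \<le> BB t * kk u" using u by (simp add: field_simps)
  qed
  ultimately show ?thesis unfolding e by (simp add: sum_distrib_left)
qed


lemma kk_alt: "kk u = alpha^(2*u) / fact (2*u - 1)"
  unfolding kk_def by (simp add: power_mult)

lemma sum_two: "(\<Sum>i\<in>{(m::nat)..<m+2}. g i) = g m + (g (m+1) :: real)"
  by (simp add: numeral_2_eq_2)

lemma L_lim: "(\<lambda>N. \<Sum>u=1..N. kk u) \<longlonglongrightarrow> alpha * sinh alpha"
proof -
  have "(\<lambda>n. if even n then 0 else alpha ^ n /\<^sub>R fact n) sums sinh alpha" by (rule sinh_converges)
  then have "(\<lambda>n. \<Sum>i\<in>{n*2..<n*2+2}. (if even i then 0 else alpha ^ i /\<^sub>R fact i)) sums sinh alpha"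
    by (rule sums_group) simp
  moreover have "(\<Sum>i\<in>{n*2..<n*2+2}. (if even i then 0 else alpha ^ i /\<^sub>R fact i)) = alpha^(2*n+1) / fact (2*n+1)" for n
    unfolding sum_two by (simp add: mult.commute divide_inverse)
  ultimately have "(\<lambda>n. alpha^(2*n+1) / fact (2*n+1)) sums sinh alpha" by simp
  then have "(\<lambda>n. alpha * (alpha^(2*n+1) / fact (2*n+1))) sums (alpha * sinh alpha)" by (rule sums_mult)
  moreover have "alpha * (alpha^(2*n+1) / fact (2*n+1)) = kk (Suc n)" for n
    unfolding kk_alt by (simp add: algebra_simps)
  ultimately have "(\<lambda>n. kk (Suc n)) sums (alpha * sinh alpha)" by simp
  then have "(\<lambda>N. \<Sum>n<N. kk (Suc n)) \<longlonglongrightarrow> alpha * sinh alpha" by (simp add: sums_def)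
  then show ?thesis by (simp add: sum.atLeast1_atMost_eq)
qed

lemma CC_lim: "CC \<longlonglongrightarrow> cosh alpha - 1"
proof -
  have "(\<lambda>n. if even n then alpha ^ n /\<^sub>R fact n else 0) sums cosh alpha" by (rule cosh_converges)
  then have "(\<lambda>n. \<Sum>i\<in>{n*2..<n*2+2}. (if even i then alpha ^ i /\<^sub>R fact i else 0)) sums cosh alpha"
    by (rule sums_group) simp
  moreover have "(\<Sum>i\<in>{n*2..<n*2+2}. (if even i then alpha ^ i /\<^sub>R fact i else 0)) = alpha^(2*n) / fact (2*n)" for n
    unfolding sum_two by (simp add: mult.commute divide_inverse)
  ultimately have "(\<lambda>n. alpha^(2*n) / fact (2*n)) sums cosh alpha" by simp
  then have "(\<lambda>N. \<Sum>n<N. alpha^(2*n) / fact (2*n)) \<longlonglongrightarrow> cosh alpha" by (simp add: sums_def)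
  then have l: "(\<lambda>N. \<Sum>n<Suc N. alpha^(2*n) / fact (2*n)) \<longlonglongrightarrow> cosh alpha" by (rule LIMSEQ_Suc)
  have e: "(\<Sum>n<Suc N. alpha^(2*n) / fact (2*n)) = 1 + CC N" for N
  proof -
    have "(\<Sum>n<Suc N. alpha^(2*n) / fact (2*n)) = 1 + (\<Sum>n<N. alpha^(2*Suc n) / fact (2*Suc n))"
      by (subst sum.lessThan_Suc_shift) simp
    also have "(\<Sum>n<N. alpha^(2*Suc n) / fact (2*Suc n)) = (\<Sum>n<N. kk (Suc n) / (2 * real (Suc n)))"
    proof (rule sum.cong[OF refl])
      fix n
      have f: "fact (2 * Suc n) = real (2 * Suc n) * fact (2 * Suc n - 1)" by (rule fact_reduce) simp
      show "alpha^(2*Suc n) / fact (2*Suc n) = kk (Suc n) / (2 * real (Suc n))"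
        unfolding kk_alt f by (simp add: field_simps)
    qed
    also have "\<dots> = CC N" unfolding CC_def by (simp add: sum.atLeast1_atMost_eq)
    finally show ?thesis .
  qed
  from l have "(\<lambda>N. 1 + CC N) \<longlonglongrightarrow> cosh alpha" unfolding e .
  then have "(\<lambda>N. (1 + CC N) - 1) \<longlonglongrightarrow> cosh alpha - 1" by (intro tendsto_diff) auto
  then show ?thesis by simp
qed


lemma polyA:
  fixes x J L :: real
  assumes x: "x \<ge> 2" and L: "0 \<le> L" "L \<le> 2/5" and J: "L - (2/5) / x \<le> J"
  shows "J * x * (x-1)^2 - L * (x+1) * x * (x-1) + 2 * (13/25) * (3*x^2-1) > 0"
proof -
  have h1: "L * x - 2/5 \<le> J * x" using J x by (simp add: field_simps)
  have h2: "(L * x - 2/5) * (x-1)^2 \<le> J * x * (x-1)^2" using h1 by (intro mult_right_mono) auto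
  have h3: "L * (x * (x-1)) \<le> 2/5 * (x * (x-1))" using L x by (intro mult_right_mono) auto
  have e2: "(L * x - 2/5) * (x-1)^2 - L * (x+1) * x * (x-1) + 2 * (13/25) * (3*x^2-1)
     = - 2 * (L * (x * (x-1))) - 2/5 * (x-1)^2 + 2 * (13/25) * (3*x^2-1)"
    by (simp add: algebra_simps power2_eq_square)
  have e4: "- 2 * (2/5 * (x * (x-1))) - 2/5 * (x-1)^2 + 2 * (13/25) * (3*x^2-1) = 48/25 * x^2 + 8/5 * x - 36/25"
    by (simp add: power2_eq_square field_simps)
  have "x^2 \<ge> 2^2" using x by (intro power_mono) auto
  then have e5: "48/25 * x^2 + 8/5 * x - 36/25 > 0" using x by simp
  show ?thesis using h2 h3 e2 e4 e5 by linarith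
qed

lemma polyB:
  fixes x J L :: real
  assumes x: "x \<ge> 2" and L: "0 \<le> L" and J: "J \<le> L"
  shows "- (J * x * (x-1)^2) + L * (x+1) * x * (x-1) + 1/4 * (3*x^2-1) > 0"
proof -
  have h2: "J * (x * (x-1)^2) \<le> L * (x * (x-1)^2)" using J x by (intro mult_right_mono) auto
  have h3: "0 \<le> L * (x * (x-1))" using L x by simp
  have e: "- (L * (x * (x-1)^2)) + L * (x+1) * x * (x-1) + 1/4 * (3*x^2-1) = 2 * (L * (x * (x-1))) + 1/4 * (3*x^2-1)"
    by (simp add: algebra_simps power2_eq_square)
  have "x^2 \<ge> 2^2" using x by (intro power_mono) auto
  then have "x^2 \<ge> 4" by simp
  moreover have "1/4 * (3*x^2-1) = 3/4 * x^2 - 1/4" by (simp add: algebra_simps)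
  ultimately have "2 * (L * (x * (x-1))) + 1/4 * (3*x^2-1) > 0" using h3 by linarith
  moreover have "J * x * (x-1)^2 = J * (x * (x-1)^2)" by (simp add: mult.assoc)
  ultimately show ?thesis using h2 e by linarith
qed

definition LL :: real where "LL = alpha * sinh alpha"

lemma c_le: "alpha^2 \<le> 2/7"
proof -
  have p: "pi \<le> 16/5" using pi_approx by simp
  have "pi^2 \<le> (16/5)^2" using p pi_gt_zero by (intro power_mono) auto
  then show ?thesis unfolding alpha_def by (simp add: power_divide)
qed

lemma geo_id: "(1 - c) * (\<Sum>u=1..N. c^u) = c - (c::real)^(Suc N)"
proof (induction N)
  case 0 then show ?case by simp
next
  case (Suc N)
  have "(\<Sum>u=1..Suc N. c^u) = (\<Sum>u=1..N. c^u) + c^(Suc N)" by simp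
  then have "(1 - c) * (\<Sum>u=1..Suc N. c^u) = (1 - c) * (\<Sum>u=1..N. c^u) + (1 - c) * c^(Suc N)"
    by (simp add: algebra_simps)
  also have "\<dots> = c - c^(Suc (Suc N))" unfolding Suc.IH by (simp add: algebra_simps)
  finally show ?case .
qed

lemma geo_le: "(\<Sum>u=1..N. (alpha^2)^u) \<le> 2/5"
proof -
  define c where "c = alpha^2"
  have c0: "0 \<le> c" and c1: "c \<le> 2/7" using c_le unfolding c_def by auto
  have "(1 - c) * (\<Sum>u=1..N. c^u) \<le> c" using geo_id[of c N] c0 by simp
  also have "c \<le> (1 - c) * (2/5)" using c1 by simp
  finally have h: "(1 - c) * (\<Sum>u=1..N. c^u) \<le> (1 - c) * (2/5)" .
  have "1 - c > 0" using c1 by simp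
  from mult_left_le_imp_le[OF h this] show ?thesis unfolding c_def .
qed

lemma fact_sq: "u \<ge> 1 \<Longrightarrow> real u ^ 2 \<le> fact (2*u - 1)"
proof (induction u rule: nat_induct_at_least)
  case base then show ?case by simp
next
  case (Suc n)
  have f1: "fact (2 * Suc n - 1) = real (2*n+1) * (fact (2*n) :: real)"
    by (simp add: fact_reduce)
  have f2: "fact (2*n) = real (2*n) * (fact (2*n - 1) :: real)"
    using Suc by (intro fact_reduce) simp
  have n1: "real n \<ge> 1" using Suc by simp
  have nn: "1 * 1 \<le> real n * real n" using n1 by (intro mult_mono) auto
  have "real (Suc n) ^ 2 \<le> real (2*n+1) * real (2*n) * 1"
    using nn by (simp add: power2_eq_square algebra_simps)
  also have "\<dots> \<le> real (2*n+1) * real (2*n) * real n ^ 2"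
    using n1 by (intro mult_left_mono) (auto simp: power2_eq_square intro: order_trans[OF _ mult_mono[of 1 _ 1]])
  also have "\<dots> \<le> real (2*n+1) * real (2*n) * fact (2*n - 1)"
    using Suc.IH by (intro mult_left_mono) auto
  finally show ?case unfolding f1 f2 by (simp add: mult.assoc)
qed

lemma kk_le: "kk u \<le> (alpha^2)^u"
  unfolding kk_def by (simp add: divide_le_eq fact_ge_1 mult_le_cancel_left1 order_trans[OF _ mult_right_mono[of 1]])

lemma kk_sq_le: "u \<ge> 1 \<Longrightarrow> real u ^ 2 * kk u \<le> (alpha^2)^u"
proof -
  assume u: "u \<ge> 1"
  have "real u ^ 2 * kk u = (alpha^2)^u * (real u ^ 2 / fact (2*u - 1))" unfolding kk_def by simp
  also have "\<dots> \<le> (alpha^2)^u * 1"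
    using fact_sq[OF u] by (intro mult_left_mono) auto
  finally show ?thesis by simp
qed

lemma kk_part_le: "(\<Sum>u=1..N. kk u) \<le> 2/5"
  using sum_mono[of "{1..N}" kk "\<lambda>u. (alpha^2)^u"] kk_le geo_le order_trans by blast

lemma LL_bounds: "0 \<le> LL" "LL \<le> 2/5"
proof -
  show "LL \<le> 2/5" unfolding LL_def using L_lim kk_part_le by (intro LIMSEQ_le_const2) auto
  show "0 \<le> LL" unfolding LL_def using L_lim kk_nonneg by (intro LIMSEQ_le_const) (auto intro: sum_nonneg)
qed

lemma JJ_le: "JJ s \<le> LL"
proof -
  have "JJ s \<le> (\<Sum>u=1..s. kk u)" unfolding JJ_def
    using qq_bounds kk_nonneg by (intro sum_mono) (simp add: mult_left_le_one_le)
  also have "\<dots> \<le> LL" unfolding LL_def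
  proof (rule LIMSEQ_le_const[OF L_lim])
    show "\<exists>N. \<forall>n\<ge>N. (\<Sum>u=1..s. kk u) \<le> (\<Sum>u=1..n. kk u)"
      using kk_nonneg by (intro exI[of _ s] allI impI sum_mono2) auto
  qed
  finally show ?thesis .
qed

lemma JJ_ge: "s \<ge> 1 \<Longrightarrow> LL - (2/5) / real s \<le> JJ s"
proof -
  assume s: "s \<ge> 1"
  have "LL - JJ s \<le> (2/5) / real s" unfolding LL_def
  proof (rule LIMSEQ_le_const2)
    show "(\<lambda>n. (\<Sum>u=1..n. kk u) - JJ s) \<longlonglongrightarrow> alpha * sinh alpha - JJ s"
      using L_lim by (intro tendsto_diff) auto
    show "\<exists>N. \<forall>n\<ge>N. (\<Sum>u=1..n. kk u) - JJ s \<le> (2/5) / real s"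
    proof (intro exI[of _ s] allI impI)
      fix n assume n: "n \<ge> s"
      have "(\<Sum>u=1..n. kk u) - JJ s = (\<Sum>u=1..n. (1 - qq s u) * kk u)"
        unfolding JJ_def sum_extend[OF n] by (simp add: sum_subtractf[symmetric] algebra_simps)
      also have "\<dots> \<le> (\<Sum>u=1..n. (alpha^2)^u / real s)"
      proof (rule sum_mono)
        fix u assume u: "u \<in> {1..n}"
        have "(1 - qq s u) * kk u \<le> (real u ^ 2 / real s) * kk u"
          using qq_lower'[of s u] s kk_nonneg by (intro mult_right_mono) auto
        also have "\<dots> = (real u ^ 2 * kk u) / real s" by simp
        also have "\<dots> \<le> (alpha^2)^u / real s" using kk_sq_le[of u] u s by (intro divide_right_mono) auto
        finally show "(1 - qq s u) * kk u \<le> (alpha^2)^u / real s" .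
      qed
      also have "\<dots> = (\<Sum>u=1..n. (alpha^2)^u) / real s" by (simp add: sum_divide_distrib)
      also have "\<dots> \<le> (2/5) / real s" using geo_le s by (intro divide_right_mono) auto
      finally show "(\<Sum>u=1..n. kk u) - JJ s \<le> (2/5) / real s" .
    qed
  qed
  then show ?thesis by simp
qed


lemma idA0:
  fixes x B J L X Y :: real
  assumes "x * X = 1" "(x - 1) * Y = 1"
  shows "B*J*X/2 - ((2*x+1)*B*(-L*X/2+13/25*X^2) - 2*x*B*(-L*Y/2+13/25*Y^2))
     = B * (J * x * (x-1)^2 - L * (x+1) * x * (x-1) + 2 * (13/25) * (3*x^2-1)) * X^2 * Y^2 / 2"
  using assms by algebra
lemma idB0:
  fixes x B J L X Y :: real
  assumes "x * X = 1" "(x - 1) * Y = 1"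
  shows "((2*x+1)*B*(-L*X/2-1/8*X^2) - 2*x*B*(-L*Y/2-1/8*Y^2)) - B*J*X/2
     = B * (- (J * x * (x-1)^2) + L * (x+1) * x * (x-1) + 1/4 * (3*x^2-1)) * X^2 * Y^2 / 2"
  using assms by algebra
lemma idA:
  fixes x B J L :: real
  assumes "x \<ge> 2"
  shows "B*J/(2*x) - ((2*x+1)*B*(-L/(2*x)+13/(25*x^2)) - 2*x*B*(-L/(2*(x-1))+13/(25*(x-1)^2)))
     = B * (J * x * (x-1)^2 - L * (x+1) * x * (x-1) + 2 * (13/25) * (3*x^2-1)) * (1/x)^2 * (1/(x-1))^2 / 2"
proof -
  have n: "x \<noteq> 0" "x - 1 \<noteq> 0" using assms by auto
  have r: "x * (1/x) = 1" "(x - 1) * (1/(x-1)) = 1" using n by auto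
  have e: "B*J/(2*x) = B*J*(1/x)/2" "-L/(2*x) = -L*(1/x)/2" "13/(25*x^2) = 13/25*(1/x)^2"
     "-L/(2*(x-1)) = -L*(1/(x-1))/2" "13/(25*(x-1)^2) = 13/25*(1/(x-1))^2"
    by (simp_all add: power_divide)
  show ?thesis unfolding e by (rule idA0[OF r])
qed
lemma idB:
  fixes x B J L :: real
  assumes "x \<ge> 2"
  shows "((2*x+1)*B*(-L/(2*x)-1/(8*x^2)) - 2*x*B*(-L/(2*(x-1))-1/(8*(x-1)^2))) - B*J/(2*x)
     = B * (- (J * x * (x-1)^2) + L * (x+1) * x * (x-1) + 1/4 * (3*x^2-1)) * (1/x)^2 * (1/(x-1))^2 / 2"
proof -
  have n: "x \<noteq> 0" "x - 1 \<noteq> 0" using assms by auto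
  have r: "x * (1/x) = 1" "(x - 1) * (1/(x-1)) = 1" using n by auto
  have e: "B*J/(2*x) = B*J*(1/x)/2" "-L/(2*x) = -L*(1/x)/2" "1/(8*x^2) = 1/8*(1/x)^2"
     "-L/(2*(x-1)) = -L*(1/(x-1))/2" "1/(8*(x-1)^2) = 1/8*(1/(x-1))^2"
    by (simp_all add: power_divide)
  show ?thesis unfolding e by (rule idB0[OF r])
qed

definition fp :: "nat \<Rightarrow> real" where
  "fp t = (2 * real t + 1) * BB t * (- LL / (2 * real t) + 13 / (25 * real t ^ 2))"
definition fm :: "nat \<Rightarrow> real" where
  "fm t = (2 * real t + 1) * BB t * (- LL / (2 * real t) - 1 / (8 * real t ^ 2))"

lemma BB_m: "(2 * real m + 1) * BB m = 2 * real (Suc m) * BB (Suc m)"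
  by (simp add: field_simps)

lemma step_fp: "m \<ge> 1 \<Longrightarrow> fp (Suc m) - fp m < ww (Suc m)"
proof -
  assume m: "m \<ge> 1"
  define x where "x = real (Suc m)"
  have x2: "x \<ge> 2" using m unfolding x_def by simp
  have rm: "real m = x - 1" unfolding x_def by simp
  have e1: "fp m = 2 * x * BB (Suc m) * (- LL / (2 * (x - 1)) + 13 / (25 * (x - 1) ^ 2))"
    unfolding fp_def BB_m rm[symmetric] x_def by simp
  have e2: "fp (Suc m) = (2 * x + 1) * BB (Suc m) * (- LL / (2 * x) + 13 / (25 * x ^ 2))"
    unfolding fp_def x_def by simp
  have e3: "ww (Suc m) = BB (Suc m) * JJ (Suc m) / (2 * x)" unfolding ww_def x_def by simp
  have P: "JJ (Suc m) * x * (x-1)^2 - LL * (x+1) * x * (x-1) + 2 * (13/25) * (3*x^2-1) > 0"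
  proof -
    have "LL - (2/5) / x \<le> JJ (Suc m)" using JJ_ge[of "Suc m"] unfolding x_def by simp
    then show ?thesis using polyA[OF x2 LL_bounds] by blast
  qed
  have "ww (Suc m) - (fp (Suc m) - fp m) > 0"
    unfolding e1 e2 e3 idA[OF x2] using P BB_pos[of "Suc m"] x2
    by (intro divide_pos_pos mult_pos_pos) auto
  then show ?thesis by simp
qed

lemma step_fm: "m \<ge> 1 \<Longrightarrow> ww (Suc m) < fm (Suc m) - fm m"
proof -
  assume m: "m \<ge> 1"
  define x where "x = real (Suc m)"
  have x2: "x \<ge> 2" using m unfolding x_def by simp
  have rm: "real m = x - 1" unfolding x_def by simp
  have e1: "fm m = 2 * x * BB (Suc m) * (- LL / (2 * (x - 1)) - 1 / (8 * (x - 1) ^ 2))"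
    unfolding fm_def BB_m rm[symmetric] x_def by simp
  have e2: "fm (Suc m) = (2 * x + 1) * BB (Suc m) * (- LL / (2 * x) - 1 / (8 * x ^ 2))"
    unfolding fm_def x_def by simp
  have e3: "ww (Suc m) = BB (Suc m) * JJ (Suc m) / (2 * x)" unfolding ww_def x_def by simp
  have P: "- (JJ (Suc m) * x * (x-1)^2) + LL * (x+1) * x * (x-1) + 1/4 * (3*x^2-1) > 0"
    using polyB[OF x2 LL_bounds(1) JJ_le[of "Suc m"]] by simp
  have "(fm (Suc m) - fm m) - ww (Suc m) > 0"
    unfolding e1 e2 e3 idB[OF x2] using P BB_pos[of "Suc m"] x2
    by (intro divide_pos_pos mult_pos_pos) auto
  then show ?thesis by simp
qed

lemma BB_aux: "a \<ge> 0 \<Longrightarrow> 1 / (a + 1) * ((2 * a + 1) / (2 * a + 2))^2 \<le> 1 / ((a::real) + 1 + 1)"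
proof -
  assume a: "a \<ge> 0"
  have e: "1 / (a + 1) * ((2 * a + 1) / (2 * a + 2))^2 = (2*a+1)^2 / ((a+1)*(2*a+2)^2)" by (simp add: power_divide)
  have i: "(2*a+1)^2 * (a+1+1) \<le> (a+1)*(2*a+2)^2" using a by (simp add: power2_eq_square algebra_simps)
  have p: "(a+1)*(2*a+2)^2 > 0" "a + 1 + 1 > 0" using a by auto
  show ?thesis unfolding e using i p by (simp add: divide_le_eq le_divide_eq mult.commute)
qed

lemma BB_sq: "BB t ^ 2 \<le> 1 / (real t + 1)"
proof (induction t)
  case 0 then show ?case by simp
next
  case (Suc t)
  have "BB (Suc t) ^ 2 = BB t ^ 2 * ((2 * real t + 1) / (2 * real t + 2))^2"
    by (simp add: power_mult_distrib power_divide)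
  also have "\<dots> \<le> 1 / (real t + 1) * ((2 * real t + 1) / (2 * real t + 2))^2"
    using Suc.IH by (intro mult_right_mono) auto
  also have "\<dots> \<le> 1 / (real t + 1 + 1)" by (rule BB_aux) simp
  also have "\<dots> = 1 / (real (Suc t) + 1)" by simp
  finally show ?case .
qed

lemma BB_lim: "BB \<longlonglongrightarrow> 0"
proof -
  have "(\<lambda>t. BB t ^ 2) \<longlonglongrightarrow> 0"
  proof (rule Lim_null_comparison[OF _ LIMSEQ_inverse_real_of_nat])
    show "\<forall>\<^sub>F t in sequentially. norm (BB t ^ 2) \<le> inverse (real (Suc t))"
      using BB_sq by (intro always_eventually allI) (simp add: divide_inverse add.commute)
  qed
  then have "(\<lambda>t. sqrt (BB t ^ 2)) \<longlonglongrightarrow> sqrt 0" by (rule tendsto_real_sqrt)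
  moreover have "sqrt (BB t ^ 2) = BB t" for t using BB_pos[of t] by simp
  ultimately show ?thesis by simp
qed

lemma gch: "(-1)^t * ((-3/2) gchoose t) = (2 * real t + 1) * BB t"
proof -
  have "(-1)^t * ((-3/2 :: real) gchoose t) = ((-1)^t * (-1)^t) * pochhammer (3/2) t / fact t"
    by (simp add: gbinomial_pochhammer)
  also have "(-1::real)^t * (-1)^t = 1" by (simp add: power_mult_distrib[symmetric])
  also have "pochhammer (3/2 :: real) t = (2 * real t + 1) * pochhammer (1/2) t"
  proof -
    have "pochhammer (1/2 :: real) (Suc t) = 1/2 * pochhammer (3/2) t" by (simp add: pochhammer_rec)
    moreover have "pochhammer (1/2 :: real) (Suc t) = pochhammer (1/2) t * (1/2 + real t)" by (simp add: pochhammer_Suc)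
    ultimately show ?thesis by (simp add: algebra_simps)
  qed
  finally show ?thesis by (simp add: BB_poch)
qed


lemma S1_lim: "S1 \<longlonglongrightarrow> cosh alpha - 1"
proof -
  have b: "(\<lambda>t. BB t * (2/5)) \<longlonglongrightarrow> 0 * (2/5)" using BB_lim by (intro tendsto_mult) auto
  have b2: "(\<lambda>t. BB t * (2/5)) \<longlonglongrightarrow> 0" using b by simp
  have ev: "\<forall>\<^sub>F t in sequentially. norm (CC t - S1 t) \<le> BB t * (2/5)"
    proof (intro always_eventually allI)
      fix t
      have "CC t - S1 t \<le> BB t * (\<Sum>u=1..t. kk u)" using S1_CC by blast
      also have "\<dots> \<le> BB t * (2/5)" using kk_part_le BB_pos[of t] by (intro mult_left_mono) auto
      finally show "norm (CC t - S1 t) \<le> BB t * (2/5)" using S1_CC[of t] by simp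
    qed
  have "(\<lambda>t. CC t - S1 t) \<longlonglongrightarrow> 0" by (rule Lim_null_comparison[OF ev b2])
  then have "(\<lambda>t. CC t - (CC t - S1 t)) \<longlonglongrightarrow> (cosh alpha - 1) - 0"
    using CC_lim by (intro tendsto_diff) auto
  then show ?thesis by simp
qed

lemma h_lim: "(\<lambda>t. (2 * real t + 1) * (- LL / (2 * real t) + K / real t ^ 2)) \<longlonglongrightarrow> - LL"
proof -
  have l: "(\<lambda>t. - LL - LL / 2 * (1 / real t) + 2 * K * (1 / real t) + K * (1 / real t) * (1 / real t))
      \<longlonglongrightarrow> - LL - LL / 2 * 0 + 2 * K * 0 + K * 0 * 0"
    by (intro tendsto_intros lim_inverse_n')
  then have l2: "(\<lambda>t. - LL - LL / 2 * (1 / real t) + 2 * K * (1 / real t) + K * (1 / real t) * (1 / real t))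
      \<longlonglongrightarrow> - LL" by simp
  have ev: "\<forall>\<^sub>F t in sequentially. - LL - LL / 2 * (1 / real t) + 2 * K * (1 / real t) + K * (1 / real t) * (1 / real t)
       = (2 * real t + 1) * (- LL / (2 * real t) + K / real t ^ 2)"
    using eventually_gt_at_top[of "0::nat"]
    by eventually_elim (simp add: field_simps power2_eq_square)
  from Lim_transform_eventually[OF l2 ev] show ?thesis .
qed

lemma fp_lim: "fp \<longlonglongrightarrow> 0"
proof -
  have l: "(\<lambda>t. BB t * ((2 * real t + 1) * (- LL / (2 * real t) + (13/25) / real t ^ 2))) \<longlonglongrightarrow> 0 * (- LL)"
    by (intro tendsto_mult BB_lim h_lim)
  have e: "\<forall>t. BB t * ((2 * real t + 1) * (- LL / (2 * real t) + (13/25) / real t ^ 2)) = fp t"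
    unfolding fp_def by simp
  from Lim_transform_eventually[OF l always_eventually[OF e]] show ?thesis by simp
qed

lemma fm_lim: "fm \<longlonglongrightarrow> 0"
proof -
  have l: "(\<lambda>t. BB t * ((2 * real t + 1) * (- LL / (2 * real t) + (-1/8) / real t ^ 2))) \<longlonglongrightarrow> 0 * (- LL)"
    by (intro tendsto_mult BB_lim h_lim)
  have e: "\<forall>t. BB t * ((2 * real t + 1) * (- LL / (2 * real t) + (-1/8) / real t ^ 2)) = fm t"
    unfolding fm_def by (simp add: diff_divide_distrib)
  from Lim_transform_eventually[OF l always_eventually[OF e]] show ?thesis by simp
qed

definition DD :: "nat \<Rightarrow> real" where "DD t = S1 t - (cosh alpha - 1)"

lemma DD_step: "DD (Suc m) - DD m = ww (Suc m)"
  unfolding DD_def S1_eq by simp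

lemma DD_lim: "DD \<longlonglongrightarrow> 0"
proof -
  have "DD = (\<lambda>t. S1 t - (cosh alpha - 1))" unfolding DD_def by auto
  moreover have "(\<lambda>t. S1 t - (cosh alpha - 1)) \<longlonglongrightarrow> (cosh alpha - 1) - (cosh alpha - 1)"
    using S1_lim by (intro tendsto_diff) auto
  ultimately show ?thesis by simp
qed

lemma DD_upper: "t \<ge> 1 \<Longrightarrow> DD t < fp t"
proof -
  assume t: "t \<ge> 1"
  define X where "X n = DD n - fp n" for n
  have inc: "X m < X (Suc m)" if "m \<ge> 1" for m
    using step_fp[OF that] DD_step[of m] unfolding X_def by simp
  have mono: "X (Suc t) \<le> X n" if "Suc t \<le> n" for n
    using that
  proof (induction n rule: dec_induct)
    case base then show ?case by simp
  next
    case (step n) then show ?case using inc[of n] t by simp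
  qed
  have lim: "X \<longlonglongrightarrow> 0"
  proof -
    have "(\<lambda>n. DD n - fp n) \<longlonglongrightarrow> 0 - 0" using DD_lim fp_lim by (intro tendsto_diff)
    then show ?thesis unfolding X_def by simp
  qed
  have "X (Suc t) \<le> 0" using mono by (intro LIMSEQ_le_const[OF lim]) auto
  then have "X t < 0" using inc[OF t] by simp
  then show ?thesis unfolding X_def by simp
qed

lemma DD_lower: "t \<ge> 1 \<Longrightarrow> fm t < DD t"
proof -
  assume t: "t \<ge> 1"
  define Y where "Y n = DD n - fm n" for n
  have dec: "Y (Suc m) < Y m" if "m \<ge> 1" for m
    using step_fm[OF that] DD_step[of m] unfolding Y_def by simp
  have mono: "Y n \<le> Y (Suc t)" if "Suc t \<le> n" for n
    using that
  proof (induction n rule: dec_induct)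
    case base then show ?case by simp
  next
    case (step n) then show ?case using dec[of n] t by simp
  qed
  have lim: "Y \<longlonglongrightarrow> 0"
  proof -
    have "(\<lambda>n. DD n - fm n) \<longlonglongrightarrow> 0 - 0" using DD_lim fm_lim by (intro tendsto_diff)
    then show ?thesis unfolding Y_def by simp
  qed
  have "0 \<le> Y (Suc t)" using mono by (intro LIMSEQ_le_const2[OF lim]) auto
  then have "0 < Y t" using dec[OF t] by simp
  then show ?thesis unfolding Y_def by simp
qed

theorem mainTheorem10:
  fixes t :: nat
  assumes "t \<ge> 1"
  shows "- 1 / (8 * real t ^ 2) <
           S1 t / ((-1)^t * ((-3/2) gchoose t))
           - ((-1)^t / ((-3/2) gchoose t)) * (cosh alpha - 1)
           + alpha * sinh alpha / (2 * real t)
       \<and> S1 t / ((-1)^t * ((-3/2) gchoose t))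
           - ((-1)^t / ((-3/2) gchoose t)) * (cosh alpha - 1)
           + alpha * sinh alpha / (2 * real t) < 13 / (25 * real t ^ 2)"
proof -
  define g where "g = (2 * real t + 1) * BB t"
  define G :: real where "G = (-3/2) gchoose t"
  have gpos: "g > 0" unfolding g_def using BB_pos[of t] by simp
  have gG: "(-1)^t * G = g" unfolding G_def g_def by (rule gch)
  have sq: "(-1::real)^t * (-1)^t = 1" by (simp add: power_mult_distrib[symmetric])
  have G: "G = (-1)^t * g" unfolding gG[symmetric] mult.assoc[symmetric] sq by simp
  have inv: "(-1)^t / G = 1 / g" unfolding G using gpos sq by (simp add: field_simps)
  have E: "S1 t / ((-1)^t * G) - ((-1)^t / G) * (cosh alpha - 1) + alpha * sinh alpha / (2 * real t)
      = DD t / g + LL / (2 * real t)"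
    unfolding gG inv DD_def LL_def by (simp add: diff_divide_distrib)
  have up: "DD t / g < - LL / (2 * real t) + 13 / (25 * real t ^ 2)"
    using DD_upper[OF assms] gpos unfolding fp_def g_def[symmetric]
    by (simp add: divide_less_eq mult.commute)
  have lo: "- LL / (2 * real t) - 1 / (8 * real t ^ 2) < DD t / g"
    using DD_lower[OF assms] gpos unfolding fm_def g_def[symmetric]
    by (simp add: less_divide_eq mult.commute)
  have "- 1 / (8 * real t ^ 2) < DD t / g + LL / (2 * real t)" using lo by simp
  moreover have "DD t / g + LL / (2 * real t) < 13 / (25 * real t ^ 2)" using up by simp
  ultimately show ?thesis unfolding G_def[symmetric] E by simp
qed

end
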